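(* Let $K\ge1$, $p_D\in(0,1]$, and for each $y\in[K]$ let $p_y^+>0$, $p_y^->0$ with $\sum_y(p_y^++p_y^-)=1$, $p_y:=p_y^++p_y^-$, $p^\pm:=\sum_yp_y^\pm$, and let $C^\pm_{y,y}\in[0,1)$ be fixed. For unknowns $(q_y,q_y^+)_y$ define \[ \Delta\mathrm{eq.opp.}(y)=\frac{p_D}{p_y^+p_y^-}(C^+_{y,y}-1)(q_yp_y^+-p_yq_y^+)+(C^+_{y,y}-C^-_{y,y})\Bigl(1-p_D\frac{q_y-q_y^+}{p_y^-}\Bigr). \] If either $p_D<p^-\min_y\frac{C^+_{y,y}-C^-_{y,y}}{1-C^-_{y,y}}$ or $p_D<p^+\min_y\frac{C^-_{y,y}-C^+_{y,y}}{1-C^+_{y,y}}$, then there exist no $(q_y,q_y^+)_y$ with $\sum_yq_y=1$, $0\le q_y^+\le q_y$ for all $y$, and $\Delta\mathrm{eq.opp.}(y)=0$ for all $y$.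
   Context: Interpretation: $p_D=\mathbb{P}(D=1)$ (memorized mass), $p_y^\pm=\mathbb{P}(Y=y,A=1\text{ resp. }0)$, $q_y=\mathbb{P}(Y=y\mid D=1)$, $q_y^+=\mathbb{P}(Y=y,A=1\mid D=1)$, $C^\pm_{y,y}$ the base classifier's true-positive rates for label $y$ on the unmemorized part in group $A=1$ resp. $A=0$; the formula is the equal opportunity gap of the memorizing classifier, with $C^\pm$ treated as fixed parameters. *)

theory Defs
  imports Complex_Main
begin

text \<open>Equal opportunity gap of the memorizing classifier for label y.
  pD: memorized mass; pp y = p_y^+, pm y = p_y^-; Cp y = C^+_{y,y}, Cm y = C^-_{y,y};
  q y = q_y, qp y = q_y^+.\<close>
definition eq_opp_gap ::
  "real \<Rightarrow> (nat \<Rightarrow> real) \<Rightarrow> (nat \<Rightarrow> real) \<Rightarrow> (nat \<Rightarrow> real) \<Rightarrow> (nat \<Rightarrow> real)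
   \<Rightarrow> (nat \<Rightarrow> real) \<Rightarrow> (nat \<Rightarrow> real) \<Rightarrow> nat \<Rightarrow> real" where
  "eq_opp_gap pD pp pm Cp Cm q qp y =
     pD / (pp y * pm y) * (Cp y - 1) * (q y * pp y - (pp y + pm y) * qp y)
     + (Cp y - Cm y) * (1 - pD * (q y - qp y) / pm y)"

end

theory Submission
  imports Defs
begin

lemma gap_eq:
  assumes "pp y > 0" "pm y > 0"
  shows "eq_opp_gap pD pp pm Cp Cm q qp y =
    pD * (1 - Cp y) * qp y / pp y + (Cp y - Cm y) - pD * (1 - Cm y) * (q y - qp y) / pm y"
  using assms unfolding eq_opp_gap_def by (simp add: field_simps)

theorem corollary14:
  fixes K :: nat and pD :: real
    and pp pm Cp Cm :: "nat \<Rightarrow> real"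
  assumes K: "K \<ge> 1"
    and pD: "0 < pD" "pD \<le> 1"
    and pos: "\<forall>y<K. pp y > 0 \<and> pm y > 0"
    and total: "(\<Sum>y<K. pp y + pm y) = 1"
    and Cp: "\<forall>y<K. 0 \<le> Cp y \<and> Cp y < 1"
    and Cm: "\<forall>y<K. 0 \<le> Cm y \<and> Cm y < 1"
    and cond: "pD < (\<Sum>y<K. pm y) * Min ((\<lambda>y. (Cp y - Cm y) / (1 - Cm y)) ` {..<K})
             \<or> pD < (\<Sum>y<K. pp y) * Min ((\<lambda>y. (Cm y - Cp y) / (1 - Cp y)) ` {..<K})"
  shows "\<not> (\<exists>q qp :: nat \<Rightarrow> real.
             (\<Sum>y<K. q y) = 1
           \<and> (\<forall>y<K. 0 \<le> qp y \<and> qp y \<le> q y)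
           \<and> (\<forall>y<K. eq_opp_gap pD pp pm Cp Cm q qp y = 0))"
proof
  assume "\<exists>q qp :: nat \<Rightarrow> real.
             (\<Sum>y<K. q y) = 1
           \<and> (\<forall>y<K. 0 \<le> qp y \<and> qp y \<le> q y)
           \<and> (\<forall>y<K. eq_opp_gap pD pp pm Cp Cm q qp y = 0)"
  then obtain q qp :: "nat \<Rightarrow> real" where sq: "(\<Sum>y<K. q y) = 1"
    and qq: "\<forall>y<K. 0 \<le> qp y \<and> qp y \<le> q y"
    and g: "\<forall>y<K. eq_opp_gap pD pp pm Cp Cm q qp y = 0" by blast
  have E: "pD * (1 - Cm y) * (q y - qp y) / pm y = pD * (1 - Cp y) * qp y / pp y + (Cp y - Cm y)"
    if "y < K" for y
    using g gap_eq[of pp y pm] pos that by fastforce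
  show False
    using cond
  proof
    define m where "m = Min ((\<lambda>y. (Cp y - Cm y) / (1 - Cm y)) ` {..<K})"
    assume c: "pD < (\<Sum>y<K. pm y) * Min ((\<lambda>y. (Cp y - Cm y) / (1 - Cm y)) ` {..<K})"
    have each: "m * pm y \<le> pD * (q y - qp y)" if y: "y < K" for y
    proof -
      have "m \<le> (Cp y - Cm y) / (1 - Cm y)" unfolding m_def using y by (intro Min_le) auto
      then have m1: "m * (1 - Cm y) \<le> Cp y - Cm y" using Cm y by (simp add: pos_le_divide_eq)
      have "0 \<le> pD * (1 - Cp y) * qp y / pp y" using pD Cp qq pos y
        by (intro divide_nonneg_pos mult_nonneg_nonneg) auto
      then have "m * (1 - Cm y) \<le> pD * (1 - Cm y) * (q y - qp y) / pm y" using E[OF y] m1 by linarith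
      then have "m * (1 - Cm y) * pm y \<le> pD * (1 - Cm y) * (q y - qp y)"
        using pos y by (simp add: pos_le_divide_eq)
      then have "(1 - Cm y) * (m * pm y) \<le> (1 - Cm y) * (pD * (q y - qp y))"
        by (simp add: algebra_simps)
      then show ?thesis using Cm y by (simp add: mult_le_cancel_left)
    qed
    have "m * (\<Sum>y<K. pm y) \<le> pD * (\<Sum>y<K. q y - qp y)"
      using sum_mono[of "{..<K}" "\<lambda>y. m * pm y" "\<lambda>y. pD * (q y - qp y)"] each
      by (simp add: sum_distrib_left)
    also have "(\<Sum>y<K. q y - qp y) \<le> 1"
      using sq qq sum_nonneg[of "{..<K}" qp] by (simp add: sum_subtractf)
    then have "pD * (\<Sum>y<K. q y - qp y) \<le> pD" using pD by (simp add: mult_le_cancel_left1)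
    finally show False using c m_def by (simp add: mult.commute)
  next
    define m where "m = Min ((\<lambda>y. (Cm y - Cp y) / (1 - Cp y)) ` {..<K})"
    assume c: "pD < (\<Sum>y<K. pp y) * Min ((\<lambda>y. (Cm y - Cp y) / (1 - Cp y)) ` {..<K})"
    have each: "m * pp y \<le> pD * qp y" if y: "y < K" for y
    proof -
      have "m \<le> (Cm y - Cp y) / (1 - Cp y)" unfolding m_def using y by (intro Min_le) auto
      then have m1: "m * (1 - Cp y) \<le> Cm y - Cp y" using Cp y by (simp add: pos_le_divide_eq)
      have "0 \<le> pD * (1 - Cm y) * (q y - qp y) / pm y" using pD Cm qq pos y
        by (intro divide_nonneg_pos mult_nonneg_nonneg) auto
      then have "m * (1 - Cp y) \<le> pD * (1 - Cp y) * qp y / pp y" using E[OF y] m1 by linarith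
      then have "m * (1 - Cp y) * pp y \<le> pD * (1 - Cp y) * qp y"
        using pos y by (simp add: pos_le_divide_eq)
      then have "(1 - Cp y) * (m * pp y) \<le> (1 - Cp y) * (pD * qp y)"
        by (simp add: algebra_simps)
      then show ?thesis using Cp y by (simp add: mult_le_cancel_left)
    qed
    have "m * (\<Sum>y<K. pp y) \<le> pD * (\<Sum>y<K. qp y)"
      using sum_mono[of "{..<K}" "\<lambda>y. m * pp y" "\<lambda>y. pD * qp y"] each
      by (simp add: sum_distrib_left)
    also have "(\<Sum>y<K. qp y) \<le> 1"
      using sq qq sum_mono[of "{..<K}" qp q] by simp
    then have "pD * (\<Sum>y<K. qp y) \<le> pD" using pD by (simp add: mult_le_cancel_left1)
    finally show False using c m_def by (simp add: mult.commute)
  qed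
qed

end
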